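(* There are no $1$-oriented and no $2$-oriented Spherical Diagrams.
   Context: A geodesic arc on the unit sphere in $\mathbb R^3$ is the unique shortest curve joining two non-antipodal points. An arc $a$ blocks an arc $b$ (equivalently, $b$ hits $a$) if an endpoint of $b$ lies in the relative interior of $a$. A Spherical Diagram (SD) is a finite non-empty collection $\mathcal D$ of pairwise interior-disjoint geodesic arcs on the unit sphere such that each arc of $\mathcal D$ is blocked by arcs of $\mathcal D$ at each of its endpoints. An SD $\mathcal D$ is $k$-oriented if there exist a set $P$ of $k$ points on the unit sphere (poles), no two antipodal, and a function $f\colon\mathcal D\to P$ such that each arc $a\in\mathcal D$ lies on a great circle through $f(a)$ but contains neither $f(a)$ nor its antipode $-f(a)$. *)

theory Defs
  imports "HOL-Analysis.Analysis"
begin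

type_synonym point = "real^3"

text \<open>A geodesic arc is represented by the ordered pair of its endpoints, which must be
distinct, non-antipodal unit vectors.\<close>

type_synonym arc = "point \<times> point"

definition valid_arc :: "arc \<Rightarrow> bool" where
  "valid_arc a \<longleftrightarrow> norm (fst a) = 1 \<and> norm (snd a) = 1 \<and> fst a \<noteq> snd a \<and> fst a \<noteq> - snd a"

definition arc_points :: "arc \<Rightarrow> point set" where
  "arc_points a = {(1 / norm ((1 - t) *\<^sub>R fst a + t *\<^sub>R snd a)) *\<^sub>R ((1 - t) *\<^sub>R fst a + t *\<^sub>R snd a)
                   | t. 0 \<le> t \<and> t \<le> 1}"

definition arc_interior :: "arc \<Rightarrow> point set" where
  "arc_interior a = {(1 / norm ((1 - t) *\<^sub>R fst a + t *\<^sub>R snd a)) *\<^sub>R ((1 - t) *\<^sub>R fst a + t *\<^sub>R snd a)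
                   | t. 0 < t \<and> t < 1}"

definition blocks :: "arc \<Rightarrow> arc \<Rightarrow> bool" where
  "blocks a b \<longleftrightarrow> fst b \<in> arc_interior a \<or> snd b \<in> arc_interior a"

definition spherical_diagram :: "arc set \<Rightarrow> bool" where
  "spherical_diagram D \<longleftrightarrow>
     finite D \<and> D \<noteq> {} \<and>
     (\<forall>a\<in>D. valid_arc a) \<and>
     (\<forall>a\<in>D. \<forall>b\<in>D. a \<noteq> b \<longrightarrow> arc_interior a \<inter> arc_interior b = {}) \<and>
     (\<forall>b\<in>D. (\<exists>a\<in>D. fst b \<in> arc_interior a) \<and> (\<exists>a\<in>D. snd b \<in> arc_interior a))"

definition great_circle :: "point set \<Rightarrow> bool" where
  "great_circle C \<longleftrightarrow> (\<exists>n. n \<noteq> 0 \<and> C = {x. norm x = 1 \<and> n \<bullet> x = 0})"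

definition k_oriented :: "nat \<Rightarrow> arc set \<Rightarrow> bool" where
  "k_oriented k D \<longleftrightarrow>
     (\<exists>P f. finite P \<and> card P = k \<and> (\<forall>p\<in>P. norm p = 1) \<and> (\<forall>p\<in>P. \<forall>q\<in>P. p \<noteq> - q) \<and>
        (\<forall>a\<in>D. f a \<in> P \<and>
           (\<exists>C. great_circle C \<and> arc_points a \<subseteq> C \<and> f a \<in> C) \<and>
           f a \<notin> arc_points a \<and> - f a \<notin> arc_points a))"

end

theory Submission imports Defs begin

lemma unit_indep:
  fixes x y :: "real^3"
  assumes "norm x = 1" "norm y = 1" "x \<noteq> y" "x \<noteq> - y"
  shows "independent {x, y}"
proof -
  have "x \<noteq> 0" using assms by auto
  have "y \<noteq> 0" using assms by auto
  have "x \<notin> span {y}"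
  proof
    assume "x \<in> span {y}"
    then obtain k where k: "x = k *\<^sub>R y" by (auto simp: span_singleton)
    then have "\<bar>k\<bar> = 1" using assms by simp
    then have "k = 1 \<or> k = -1" by auto
    then show False using k assms by auto
  qed
  then show ?thesis using \<open>y \<noteq> 0\<close> assms(3)
    by (simp add: independent_insert)
qed

lemma plane_span:
  fixes m x y z :: "real^3"
  assumes "m \<noteq> 0" "norm x = 1" "norm y = 1" "x \<noteq> y" "x \<noteq> - y"
    "m \<bullet> x = 0" "m \<bullet> y = 0" "m \<bullet> z = 0"
  shows "\<exists>\<alpha> \<beta>. z = \<alpha> *\<^sub>R x + \<beta> *\<^sub>R y"
proof -
  have ind: "independent {x, y}" using unit_indep assms by blast
  have d: "dim {w. m \<bullet> w = 0} = 2" using dim_hyperplane[OF assms(1)] by simp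
  have "card {x, y} = 2" using assms(4) by simp
  then have "{w. m \<bullet> w = 0} \<subseteq> span {x, y}"
    using card_eq_dim[of "{x,y}" "{w. m \<bullet> w = 0}"] ind d assms by auto
  then have "z \<in> span {x, y}" using assms by auto
  then obtain k where "z - k *\<^sub>R x \<in> span {y}" by (auto simp: span_insert)
  then obtain j where "z - k *\<^sub>R x = j *\<^sub>R y" by (auto simp: span_singleton)
  then have "z = k *\<^sub>R x + j *\<^sub>R y" by (simp add: algebra_simps)
  then show ?thesis by blast
qed

lemma comb_nz:
  fixes u v :: "real^3"
  assumes "valid_arc (u,v)" "0 \<le> t" "t \<le> 1"
  shows "(1 - t) *\<^sub>R u + t *\<^sub>R v \<noteq> 0"
proof
  assume h: "(1 - t) *\<^sub>R u + t *\<^sub>R v = 0"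
  then have e: "(1 - t) *\<^sub>R u = - (t *\<^sub>R v)" by (simp add: eq_neg_iff_add_eq_0)
  have "norm ((1 - t) *\<^sub>R u) = norm (t *\<^sub>R v)" using e by simp
  then have "1 - t = t" using assms by (simp add: valid_arc_def)
  then have t2: "t = 1/2" by simp
  have "(1 - 1/2::real) *\<^sub>R u = - ((1/2::real) *\<^sub>R v)" using e unfolding t2 .
  then have "(1/2::real) *\<^sub>R u = (1/2::real) *\<^sub>R (- v)" using e by (simp add: scaleR_right.minus)
  then have "u = - v" by (metis scaleR_cancel_left zero_neq_numeral divide_eq_0_iff one_neq_zero)
  then show False using assms by (simp add: valid_arc_def)
qed

lemma cone_point:
  fixes u v w :: "real^3"
  assumes "la \<ge> 0" "\<mu> \<ge> 0" "la + \<mu> > 0" "w = la *\<^sub>R u + \<mu> *\<^sub>R v"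
  defines "t \<equiv> \<mu> / (la + \<mu>)"
  shows "0 \<le> t" "t \<le> 1" "(1 / norm ((1 - t) *\<^sub>R u + t *\<^sub>R v)) *\<^sub>R ((1 - t) *\<^sub>R u + t *\<^sub>R v) = (1 / norm w) *\<^sub>R w"
    "la > 0 \<Longrightarrow> t < 1" "\<mu> > 0 \<Longrightarrow> 0 < t"
proof -
  show "0 \<le> t" "t \<le> 1" "la > 0 \<Longrightarrow> t < 1" "\<mu> > 0 \<Longrightarrow> 0 < t" using assms(1-3) by (auto simp: t_def divide_simps)
  have "1 - t = la / (la + \<mu>)" using assms(1-3) by (simp add: t_def divide_simps)
  moreover have "(1 / (la + \<mu>)) *\<^sub>R w = (la / (la + \<mu>)) *\<^sub>R u + (\<mu> / (la + \<mu>)) *\<^sub>R v"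
    using assms(4) by (simp add: scaleR_add_right)
  ultimately have e: "(1 - t) *\<^sub>R u + t *\<^sub>R v = (1 / (la + \<mu>)) *\<^sub>R w"
    by (simp add: t_def)
  have "norm ((1 / (la + \<mu>)) *\<^sub>R w) = norm w / (la + \<mu>)" using assms by simp
  then show "(1 / norm ((1 - t) *\<^sub>R u + t *\<^sub>R v)) *\<^sub>R ((1 - t) *\<^sub>R u + t *\<^sub>R v) = (1 / norm w) *\<^sub>R w"
    unfolding e using assms by simp
qed

lemma to_arc_points:
  fixes u v w :: "real^3"
  assumes "la \<ge> 0" "\<mu> \<ge> 0" "w = la *\<^sub>R u + \<mu> *\<^sub>R v" "norm w = 1"
  shows "w \<in> arc_points (u,v)"
proof -
  have "la + \<mu> > 0"
  proof (rule ccontr)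
    assume "\<not> la + \<mu> > 0"
    then have "la = 0" "\<mu> = 0" using assms by auto
    then show False using assms by simp
  qed
  from cone_point[OF assms(1,2) this assms(3)] assms(4) show ?thesis
    unfolding arc_points_def by (auto intro!: exI[of _ "\<mu> / (la + \<mu>)"])
qed

lemma to_arc_interior:
  fixes u v w :: "real^3"
  assumes "la > 0" "\<mu> > 0" "w = la *\<^sub>R u + \<mu> *\<^sub>R v"
  shows "(1 / norm w) *\<^sub>R w \<in> arc_interior (u,v)"
proof -
  from cone_point[of la \<mu> w u v] assms show ?thesis
    unfolding arc_interior_def by (auto intro!: exI[of _ "\<mu> / (la + \<mu>)"])
qed

lemma from_interior:
  fixes u v x :: "real^3"
  assumes "valid_arc (u,v)" "x \<in> arc_interior (u,v)"
  shows "\<exists>la \<mu>. la > 0 \<and> \<mu> > 0 \<and> x = la *\<^sub>R u + \<mu> *\<^sub>R v"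
proof -
  obtain t where t: "0 < t" "t < 1" and x: "x = (1 / norm ((1 - t) *\<^sub>R u + t *\<^sub>R v)) *\<^sub>R ((1 - t) *\<^sub>R u + t *\<^sub>R v)"
    using assms(2) unfolding arc_interior_def by auto
  define s where "s = 1 / norm ((1 - t) *\<^sub>R u + t *\<^sub>R v)"
  have "s > 0" using comb_nz[OF assms(1)] t by (simp add: s_def)
  moreover have "x = (s * (1 - t)) *\<^sub>R u + (s * t) *\<^sub>R v" unfolding x s_def[symmetric] by (simp add: scaleR_add_right)
  ultimately show ?thesis using t by (intro exI[of _ "s * (1 - t)"] exI[of _ "s * t"]) auto
qed

lemma endpoints_in:
  fixes u v :: "real^3"
  assumes "valid_arc (u,v)"
  shows "u \<in> arc_points (u,v)" "v \<in> arc_points (u,v)"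
  using to_arc_points[of 1 0 u u v] to_arc_points[of 0 1 v u v] assms by (auto simp: valid_arc_def)

lemma pole_decomp:
  fixes u v c :: "real^3"
  assumes va: "valid_arc (u,v)" and c1: "norm c = 1"
    and gc: "\<exists>C. great_circle C \<and> arc_points (u,v) \<subseteq> C \<and> c \<in> C"
    and n1: "c \<notin> arc_points (u,v)" and n2: "- c \<notin> arc_points (u,v)"
  shows "\<exists>\<alpha> \<beta>. c = \<alpha> *\<^sub>R u + \<beta> *\<^sub>R v \<and> \<alpha> * \<beta> < 0"
proof -
  obtain C m where m: "m \<noteq> 0" "C = {x. norm x = 1 \<and> m \<bullet> x = 0}" and sub: "arc_points (u,v) \<subseteq> C" and cC: "c \<in> C"
    using gc unfolding great_circle_def by blast
  have "m \<bullet> u = 0" "m \<bullet> v = 0" using endpoints_in[OF va] sub m by auto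
  moreover have "m \<bullet> c = 0" using cC m by auto
  ultimately obtain \<alpha> \<beta> where ab: "c = \<alpha> *\<^sub>R u + \<beta> *\<^sub>R v"
    using plane_span[of m u v c] m va unfolding valid_arc_def by auto
  have "\<alpha> * \<beta> < 0"
  proof (rule ccontr)
    assume "\<not> \<alpha> * \<beta> < 0"
    then have "(\<alpha> \<ge> 0 \<and> \<beta> \<ge> 0) \<or> (\<alpha> \<le> 0 \<and> \<beta> \<le> 0)"
      using zero_le_mult_iff[of \<alpha> \<beta>] by auto
    then show False
    proof
      assume "\<alpha> \<ge> 0 \<and> \<beta> \<ge> 0"
      then show False using to_arc_points[of \<alpha> \<beta> c u v] ab c1 n1 by auto
    next
      assume "\<alpha> \<le> 0 \<and> \<beta> \<le> 0"
      moreover have e2: "- c = (- \<alpha>) *\<^sub>R u + (- \<beta>) *\<^sub>R v" using ab by simp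
      moreover have "norm (- c) = 1" using c1 by simp
      ultimately have "- c \<in> arc_points (u,v)" using to_arc_points[of "- \<alpha>" "- \<beta>" "- c" u v] by auto
      then show False using n2 by blast
    qed
  qed
  then show ?thesis using ab by blast
qed

lemma no_self:
  fixes u v :: "real^3"
  assumes va: "valid_arc (u,v)" and e: "u = la *\<^sub>R u + \<mu> *\<^sub>R v" and mu: "\<mu> > 0"
  shows False
proof -
  have "\<mu> *\<^sub>R v = (1 - la) *\<^sub>R u" using e by (simp add: algebra_simps)
  then have "(1 / \<mu>) *\<^sub>R (\<mu> *\<^sub>R v) = (1 / \<mu>) *\<^sub>R ((1 - la) *\<^sub>R u)" by simp
  then have "v = ((1 - la) / \<mu>) *\<^sub>R u" using mu by simp
  then have "v \<in> span {u}" unfolding span_singleton by blast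
  moreover have "v \<noteq> - u"
  proof
    assume "v = - u"
    then have "u = - v" by simp
    then show False using va unfolding valid_arc_def by simp
  qed
  then have "independent {v, u}" using unit_indep[of v u] va unfolding valid_arc_def by auto
  moreover have "v \<noteq> u" using va unfolding valid_arc_def by auto
  ultimately show False by (simp add: independent_insert)
qed

lemma mediant:
  fixes A B a1 b1 la \<mu> :: real
  assumes AB: "A * B > 0" and l: "la > 0" and m: "\<mu> > 0" and ne: "a1 / A \<noteq> b1 / B"
  shows "min (a1 / A) (b1 / B) < (la * a1 + \<mu> * b1) / (la * A + \<mu> * B)"
proof -
  define ga gb Dn where "ga = a1 / A" and "gb = b1 / B" and "Dn = la * A + \<mu> * B"
  have A0: "A \<noteq> 0" "B \<noteq> 0" using AB by auto
  have a1: "a1 = ga * A" and b1: "b1 = gb * B" using A0 by (auto simp: ga_def gb_def)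
  have ADn: "A * Dn > 0"
  proof -
    have "A * Dn = la * (A * A) + \<mu> * (A * B)" by (simp add: Dn_def algebra_simps)
    moreover have "A * A > 0" using A0 by (auto simp add: zero_less_mult_iff linorder_neq_iff)
    ultimately show ?thesis using l m AB by (simp add: add_pos_pos)
  qed
  have BDn: "B * Dn > 0"
  proof -
    have "B * Dn = la * (A * B) + \<mu> * (B * B)" by (simp add: Dn_def algebra_simps)
    moreover have "B * B > 0" using A0 by (auto simp add: zero_less_mult_iff linorder_neq_iff)
    ultimately show ?thesis using l m AB by (simp add: add_pos_pos)
  qed
  have D0: "Dn \<noteq> 0" using ADn by auto
  define w1 w2 where "w1 = la * A / Dn" and "w2 = \<mu> * B / Dn"
  have w1: "w1 > 0"
  proof -
    have "w1 = la * (A * Dn) / (Dn * Dn)" using D0 by (simp add: w1_def field_simps)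
    moreover have "la * (A * Dn) > 0" using ADn l by simp
    moreover have "Dn * Dn > 0" using D0 by (auto simp add: zero_less_mult_iff linorder_neq_iff)
    ultimately show ?thesis by (metis divide_pos_pos)
  qed
  have w2: "w2 > 0"
  proof -
    have "w2 = \<mu> * (B * Dn) / (Dn * Dn)" using D0 by (simp add: w2_def field_simps)
    moreover have "\<mu> * (B * Dn) > 0" using BDn m by simp
    moreover have "Dn * Dn > 0" using D0 by (auto simp add: zero_less_mult_iff linorder_neq_iff)
    ultimately show ?thesis by (metis divide_pos_pos)
  qed
  have "w1 + w2 = Dn / Dn" unfolding w1_def w2_def Dn_def by (simp only: add_divide_distrib)
  then have s: "w1 + w2 = 1" using D0 by simp
  have V: "(la * a1 + \<mu> * b1) / (la * A + \<mu> * B) = w1 * ga + w2 * gb"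
    unfolding Dn_def[symmetric] w1_def w2_def a1 b1 by (simp add: add_divide_distrib algebra_simps)
  have "ga \<noteq> gb" using ne by (simp add: ga_def gb_def)
  then have "min ga gb < w1 * ga + w2 * gb"
  proof (cases "ga < gb")
    case True
    then have "w2 * ga < w2 * gb" using w2 by simp
    then show ?thesis using True s by (simp add: min_def) (metis add.commute add_less_cancel_left distrib_right mult_1)
  next
    case False
    then have "gb < ga" using \<open>ga \<noteq> gb\<close> by simp
    then have "w1 * gb < w1 * ga" using w1 by simp
    then show ?thesis using False s by (simp add: min_def) (metis add_less_cancel_right distrib_right mult_1)
  qed
  then show ?thesis using V by (simp add: ga_def gb_def)
qed

lemma sign_lemma:
  fixes \<alpha> \<beta> x y :: real
  assumes e: "\<alpha> * x + \<beta> * y = 0" and ab: "\<alpha> * \<beta> < 0"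
  shows "(x = 0 \<and> y = 0) \<or> x * y > 0"
proof -
  have a0: "\<alpha> \<noteq> 0" "\<beta> \<noteq> 0" using ab by auto
  have ax: "\<alpha> * x = - (\<beta> * y)" using e by linarith
  then have "(\<alpha> * \<beta>) * (x * y) = - ((\<beta> * y) * (\<beta> * y))"
    by (metis mult.assoc mult.left_commute mult_minus_left)
  moreover have "(\<beta> * y) * (\<beta> * y) \<ge> 0" by simp
  ultimately have "(\<alpha> * \<beta>) * (x * y) \<le> 0" by linarith
  then have xy: "x * y \<ge> 0" using ab by (simp add: mult_le_0_iff)
  show ?thesis
  proof (cases "x * y = 0")
    case True
    then have "x = 0 \<or> y = 0" by simp
    then show ?thesis using ax a0 by auto
  next
    case False
    then show ?thesis using xy by linarith
  qed
qed

lemma core: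
  fixes D :: "arc set" and p q :: "real^3" and f :: "arc \<Rightarrow> real^3"
  assumes SD: "spherical_diagram D" and p1: "norm p = 1" and q1: "norm q = 1"
    and pq: "p \<noteq> q" "p \<noteq> - q"
    and H: "\<forall>a\<in>D. f a \<in> {p,q} \<and> (\<exists>C. great_circle C \<and> arc_points a \<subseteq> C \<and> f a \<in> C) \<and>
              f a \<notin> arc_points a \<and> - f a \<notin> arc_points a"
  shows False
proof -
  from SD have fin: "finite D" and ne: "D \<noteq> {}" and VA: "\<forall>a\<in>D. valid_arc a"
    and DJ: "\<forall>a\<in>D. \<forall>b\<in>D. a \<noteq> b \<longrightarrow> arc_interior a \<inter> arc_interior b = {}"
    and BL: "\<forall>b\<in>D. (\<exists>a\<in>D. fst b \<in> arc_interior a) \<and> (\<exists>a\<in>D. snd b \<in> arc_interior a)"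
    unfolding spherical_diagram_def by auto
  have VA': "valid_arc (fst a, snd a)" if "a \<in> D" for a using VA that by simp
  define n where "n = cross3 p q"
  define l where "l = p + q"
  have n0: "n \<noteq> 0"
  proof
    assume "n = 0"
    then have "collinear {0, p, q}" by (simp add: n_def cross_eq_0)
    moreover have "p \<noteq> 0" "q \<noteq> 0" using p1 q1 by auto
    ultimately obtain c where c: "q = c *\<^sub>R p" using collinear_lemma by blast
    then have "\<bar>c\<bar> = 1" using p1 q1 by simp
    then have "c = 1 \<or> c = -1" by auto
    then show False using c pq by auto
  qed
  have nc: "n \<bullet> c = 0" if "c \<in> {p,q}" for c
    using that dot_cross_self[of p q] by (auto simp: n_def inner_commute)
  have pp: "p \<bullet> p = 1" using p1 by (metis power2_norm_eq_inner one_power2)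
  have qq: "q \<bullet> q = 1" using q1 by (metis power2_norm_eq_inner one_power2)
  have pqi: "p \<bullet> q > -1"
  proof -
    have "p + q \<noteq> 0" using pq(2) by (simp add: eq_neg_iff_add_eq_0)
    then have "norm (p + q) ^ 2 > 0" by simp
    moreover have "norm (p + q) ^ 2 = 2 + 2 * (p \<bullet> q)"
      using pp qq by (simp add: power2_norm_eq_inner inner_add inner_commute)
    ultimately show ?thesis by linarith
  qed
  have lc: "l \<bullet> c \<noteq> 0" if "c \<in> {p,q}" for c
    using that pqi pp qq by (auto simp: l_def inner_add inner_commute)
  have DC: "\<exists>\<alpha> \<beta>. f a = \<alpha> *\<^sub>R fst a + \<beta> *\<^sub>R snd a \<and> \<alpha> * \<beta> < 0" if "a \<in> D" for a
  proof -
    have "norm (f a) = 1" using H that p1 q1 by auto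
    then show ?thesis using pole_decomp[of "fst a" "snd a" "f a"] VA'[OF that] H that by auto
  qed
  have SS: "(n \<bullet> fst a = 0 \<and> n \<bullet> snd a = 0) \<or> (n \<bullet> fst a) * (n \<bullet> snd a) > 0" if aD0: "a \<in> D" for a
  proof -
    obtain \<alpha> \<beta> where ab: "f a = \<alpha> *\<^sub>R fst a + \<beta> *\<^sub>R snd a" "\<alpha> * \<beta> < 0" using DC[OF aD0] by blast
    have "n \<bullet> f a = 0" using nc H aD0 by auto
    then have "\<alpha> * (n \<bullet> fst a) + \<beta> * (n \<bullet> snd a) = 0" using ab by (simp add: inner_add_right)
    then show ?thesis using ab(2) sign_lemma by blast
  qed
  define G where "G x = (l \<bullet> x) / (n \<bullet> x)" for x
  have GNE: "G (fst a) \<noteq> G (snd a)" if aD: "a \<in> D" and off: "(n \<bullet> fst a) * (n \<bullet> snd a) > 0" for a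
  proof
    assume eq: "G (fst a) = G (snd a)"
    obtain \<alpha> \<beta> where ab: "f a = \<alpha> *\<^sub>R fst a + \<beta> *\<^sub>R snd a" "\<alpha> * \<beta> < 0" using DC[OF aD] by blast
    have nz: "n \<bullet> fst a \<noteq> 0" "n \<bullet> snd a \<noteq> 0" using off by auto
    define k where "k = G (fst a)"
    have lu: "l \<bullet> fst a = k * (n \<bullet> fst a)" using nz by (simp add: k_def G_def)
    have lv: "l \<bullet> snd a = k * (n \<bullet> snd a)" using nz eq by (simp add: k_def G_def)
    have "n \<bullet> f a = 0" using nc H aD by auto
    then have z: "\<alpha> * (n \<bullet> fst a) + \<beta> * (n \<bullet> snd a) = 0" using ab by (simp add: inner_add_right)
    have "l \<bullet> f a = \<alpha> * (l \<bullet> fst a) + \<beta> * (l \<bullet> snd a)" using ab by (simp add: inner_add_right)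
    also have "\<dots> = k * (\<alpha> * (n \<bullet> fst a) + \<beta> * (n \<bullet> snd a))" by (simp add: lu lv algebra_simps)
    also have "\<dots> = 0" using z by simp
    finally show False using lc H aD by auto
  qed
  show False
  proof (cases "\<exists>a\<in>D. (n \<bullet> fst a) * (n \<bullet> snd a) > 0")
    case True
    define Doff where "Doff = {a\<in>D. (n \<bullet> fst a) * (n \<bullet> snd a) > 0}"
    define E where "E = fst ` Doff \<union> snd ` Doff"
    have finE: "finite E" using fin by (simp add: E_def Doff_def)
    have neE: "E \<noteq> {}" using True unfolding E_def Doff_def by blast
    have "Min (G ` E) \<in> G ` E" using finE neE by simp
    then obtain x0 where x0E: "x0 \<in> E" and gx0: "G x0 = Min (G ` E)" by auto
    have le: "G x0 \<le> G y" if "y \<in> E" for y using gx0 finE that by simp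
    from x0E obtain a where aD: "a \<in> Doff" and x0a: "x0 = fst a \<or> x0 = snd a" by (auto simp: E_def)
    have nx0: "n \<bullet> x0 \<noteq> 0" using aD x0a by (auto simp: Doff_def)
    obtain b where bD: "b \<in> D" and xb: "x0 \<in> arc_interior b"
      using x0a BL aD by (auto simp: Doff_def)
    have "x0 \<in> arc_interior (fst b, snd b)" using xb by simp
    then obtain la \<mu> where lm: "la > 0" "\<mu> > 0" and x0e: "x0 = la *\<^sub>R fst b + \<mu> *\<^sub>R snd b"
      using from_interior[OF VA'[OF bD]] by blast
    have nx: "n \<bullet> x0 = la * (n \<bullet> fst b) + \<mu> * (n \<bullet> snd b)" using x0e by (simp add: inner_add_right)
    have lx: "l \<bullet> x0 = la * (l \<bullet> fst b) + \<mu> * (l \<bullet> snd b)" using x0e by (simp add: inner_add_right)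
    have boff: "(n \<bullet> fst b) * (n \<bullet> snd b) > 0" using SS[OF bD] nx nx0 by auto
    then have "b \<in> Doff" using bD by (simp add: Doff_def)
    then have "fst b \<in> E" "snd b \<in> E" by (auto simp: E_def)
    then have "G x0 \<le> min (G (fst b)) (G (snd b))" using le by simp
    moreover have "min (G (fst b)) (G (snd b)) < G x0"
      using mediant[OF boff lm, of "l \<bullet> fst b" "l \<bullet> snd b"] GNE[OF bD boff] nx lx
      by (simp add: G_def)
    ultimately show False by (simp add: min_def split: if_splits)
  next
    case False
    then have ON: "\<forall>a\<in>D. n \<bullet> fst a = 0 \<and> n \<bullet> snd a = 0" using SS by auto
    obtain a where aD: "a \<in> D" using ne by auto
    obtain b where bD: "b \<in> D" and xb: "fst a \<in> arc_interior b" using BL aD by auto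
    have "fst a \<in> arc_interior (fst b, snd b)" using xb by simp
    then obtain la \<mu> where lm: "la > 0" "\<mu> > 0" and ue: "fst a = la *\<^sub>R fst b + \<mu> *\<^sub>R snd b"
      using from_interior[OF VA'[OF bD]] by blast
    show False
    proof (cases "a = b")
      case True
      then show False using no_self[OF VA'[OF aD], of la \<mu>] ue lm by simp
    next
      case False
      have vb: "norm (fst b) = 1" "norm (snd b) = 1" "fst b \<noteq> snd b" "fst b \<noteq> - snd b"
        using VA'[OF bD] unfolding valid_arc_def by simp_all
      have "n \<bullet> fst b = 0" "n \<bullet> snd b = 0" "n \<bullet> snd a = 0" using ON aD bD by auto
      then obtain \<alpha> \<beta> where ve: "snd a = \<alpha> *\<^sub>R fst b + \<beta> *\<^sub>R snd b"
        using plane_span[OF n0 vb] by blast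
      define \<epsilon> where "\<epsilon> = min la \<mu> / (\<bar>\<alpha>\<bar> + \<bar>\<beta>\<bar> + 1)"
      have den: "\<bar>\<alpha>\<bar> + \<bar>\<beta>\<bar> + 1 > 0" by simp
      have e0: "\<epsilon> > 0" using lm den by (simp add: \<epsilon>_def)
      have "\<epsilon> * (\<bar>\<alpha>\<bar> + \<bar>\<beta>\<bar> + 1) = min la \<mu>" using den by (simp add: \<epsilon>_def)
      then have es: "\<epsilon> * \<bar>\<alpha>\<bar> + \<epsilon> * \<bar>\<beta>\<bar> + \<epsilon> = min la \<mu>" by (simp add: algebra_simps)
      have "\<epsilon> * \<bar>\<alpha>\<bar> \<ge> 0" "\<epsilon> * \<bar>\<beta>\<bar> \<ge> 0" using e0 by simp_all
      moreover have "- (\<epsilon> * \<bar>\<alpha>\<bar>) \<le> \<epsilon> * \<alpha>" "- (\<epsilon> * \<bar>\<beta>\<bar>) \<le> \<epsilon> * \<beta>"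
        using mult_left_mono[of "- \<bar>\<alpha>\<bar>" \<alpha> \<epsilon>] mult_left_mono[of "- \<bar>\<beta>\<bar>" \<beta> \<epsilon>] e0 by auto
      moreover have "min la \<mu> \<le> la" "min la \<mu> \<le> \<mu>" by simp_all
      ultimately have c1: "la + \<epsilon> * \<alpha> > 0" and c2: "\<mu> + \<epsilon> * \<beta> > 0" using es e0 by linarith+
      define w where "w = fst a + \<epsilon> *\<^sub>R snd a"
      have w1: "w = 1 *\<^sub>R fst a + \<epsilon> *\<^sub>R snd a" by (simp add: w_def)
      have w2: "w = (la + \<epsilon> * \<alpha>) *\<^sub>R fst b + (\<mu> + \<epsilon> * \<beta>) *\<^sub>R snd b"
        unfolding w_def ue ve by (simp add: scaleR_add_right scaleR_add_left)
      have "(1 / norm w) *\<^sub>R w \<in> arc_interior (fst a, snd a)"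
        using to_arc_interior[OF _ e0 w1] by simp
      moreover have "(1 / norm w) *\<^sub>R w \<in> arc_interior (fst b, snd b)"
        using to_arc_interior[OF c1 c2 w2] by simp
      ultimately show False using DJ aD bD False by auto
    qed
  qed
qed

lemma axis_facts:
  "norm (axis 1 1 :: real^3) = 1" "norm (axis 2 1 :: real^3) = 1"
  "(axis 1 1 :: real^3) \<noteq> axis 2 1" "(axis 1 1 :: real^3) \<noteq> - axis 2 1"
  "- (axis 1 1 :: real^3) \<noteq> axis 2 1" "- (axis 1 1 :: real^3) \<noteq> - axis 2 1"
  apply (simp_all only: norm_axis_1)
  by (auto simp: vec_eq_iff axis_def exhaust_3 forall_3)

theorem mainTheorem8:
  shows "\<forall>D. spherical_diagram D \<longrightarrow> \<not> k_oriented 1 D \<and> \<not> k_oriented 2 D"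
proof (intro allI impI conjI notI)
  fix D assume SD: "spherical_diagram D"
  {
    assume "k_oriented 2 D"
    then obtain P f where P: "card P = 2" "\<forall>p\<in>P. norm p = 1" "\<forall>p\<in>P. \<forall>q\<in>P. p \<noteq> - q"
      and H: "\<forall>a\<in>D. f a \<in> P \<and> (\<exists>C. great_circle C \<and> arc_points a \<subseteq> C \<and> f a \<in> C) \<and>
              f a \<notin> arc_points a \<and> - f a \<notin> arc_points a"
      unfolding k_oriented_def by blast
    from P(1) obtain p q where Pe: "P = {p, q}" and pq: "p \<noteq> q" by (meson card_2_iff)
    show False using core[OF SD, of p q f] P Pe pq H by auto
  }
  {
    assume "k_oriented 1 D"
    then obtain P f where P: "card P = 1" "\<forall>p\<in>P. norm p = 1" "\<forall>p\<in>P. \<forall>q\<in>P. p \<noteq> - q"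
      and H: "\<forall>a\<in>D. f a \<in> P \<and> (\<exists>C. great_circle C \<and> arc_points a \<subseteq> C \<and> f a \<in> C) \<and>
              f a \<notin> arc_points a \<and> - f a \<notin> arc_points a"
      unfolding k_oriented_def by blast
    from P(1) obtain p where Pe: "P = {p}" using card_1_singleton_iff[of P] by auto
    have p1: "norm p = 1" using P Pe by auto
    obtain q :: "real^3" where q1: "norm q = 1" and pq: "p \<noteq> q" "p \<noteq> - q"
    proof (cases "p = axis 1 1 \<or> p = - axis 1 1")
      case True
      then show ?thesis using that[of "axis 2 1"] axis_facts by auto
    next
      case False
      then show ?thesis using that[of "axis 1 1"] axis_facts by auto
    qed
    have H': "\<forall>a\<in>D. f a \<in> {p, q} \<and> (\<exists>C. great_circle C \<and> arc_points a \<subseteq> C \<and> f a \<in> C) \<and>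
              f a \<notin> arc_points a \<and> - f a \<notin> arc_points a" using H Pe by auto
    show False using core[OF SD p1 q1 pq H'] .
  }
qed

end
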